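(* Let $\pi$ be a function assigning to each $3$-element subset $S$ of $\{a,b,c,d,e\}$ a string $\pi(S)$ of length $3$ that is an ordering of the three elements of $S$, and suppose that $d(\pi(S),\pi(S'))\le 2$ for all $3$-element subsets $S,S'$ with $|S\oplus S'|=2$. Then for every $2$-element subset $\{x,y\}\subseteq\{a,b,c,d,e\}$ there exists a position $i\in\{1,2,3\}$ such that either $\pi(S)[i]=x$ for every $3$-element set $S$ with $\{x,y\}\subset S\subseteq\{a,b,c,d,e\}$, or $\pi(S)[i]=y$ for every such $S$.
   Context: $d(X,Y)$ denotes the Hamming distance between strings $X,Y$ of equal length, and $\pi(S)[i]$ denotes the $i$-th letter of the string $\pi(S)$. $S\oplus S'$ is the symmetric difference of sets. *)

theory Defs
  imports Main
begin

definition hamming :: "'a list \<Rightarrow> 'a list \<Rightarrow> nat" where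
  "hamming xs ys = card {i. i < length xs \<and> xs ! i \<noteq> ys ! i}"

definition symdiff :: "'a set \<Rightarrow> 'a set \<Rightarrow> 'a set" where
  "symdiff A B = (A - B) \<union> (B - A)"

end

theory Submission
  imports Defs
begin

lemma ham3:
  assumes "length p = 3" "length q = 3" "hamming p q \<le> 2"
  shows "\<exists>i<3. p!i = q!i"
proof (rule ccontr)
  assume h: "\<not> ?thesis"
  have f: "\<forall>i<3. p!i \<noteq> q!i" using h by blast
  have "{i. i < length p \<and> p ! i \<noteq> q ! i} = {..<3}"
    using f assms(1) by auto
  then have "hamming p q = 3" unfolding hamming_def by simp
  with assms(3) show False by simp
qed

lemma agree:
  assumes "length p = 3" "length q = 3" "distinct p" "distinct q" "hamming p q \<le> 2"
    "set p \<inter> set q \<subseteq> {x,y}" "p!a = x" "q!a' = x" "p!b = y" "q!b' = y"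
    "a < 3" "a' < 3" "b < 3" "b' < 3"
  shows "a = a' \<or> b = b'"
proof -
  obtain i where i: "i < 3" "p!i = q!i" using ham3 assms(1,2,5) by blast
  have "p!i \<in> set p" "q!i \<in> set q" using i assms(1,2) by (metis nth_mem)+
  then have "p!i = x \<or> p!i = y" using i assms(6) by auto
  then show ?thesis
  proof
    assume "p!i = x"
    then have "i = a" "i = a'" using assms i nth_eq_iff_index_eq by metis+
    then show ?thesis by simp
  next
    assume "p!i = y"
    then have "i = b" "i = b'" using assms i nth_eq_iff_index_eq by metis+
    then show ?thesis by simp
  qed
qed

lemma pos:
  assumes "length p = 3" "x \<in> set p"
  obtains i where "i < 3" "p!i = x"
  using assms by (metis in_set_conv_nth)

lemma comb:
  fixes A1 A2 A3 B1 B2 B3 :: nat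
  assumes "A1 = A2 \<or> B1 = B2" "A1 = A3 \<or> B1 = B3" "A2 = A3 \<or> B2 = B3"
  shows "(A1 = A2 \<and> A1 = A3) \<or> (B1 = B2 \<and> B1 = B3)"
  using assms by auto


theorem lemma3p3:
  fixes a b c d e :: 'a
    and \<pi> :: "'a set \<Rightarrow> 'a list"
  defines "U \<equiv> {a, b, c, d, e}"
  assumes dist: "distinct [a, b, c, d, e]"
    and ord: "\<And>S. S \<subseteq> U \<Longrightarrow> card S = 3 \<Longrightarrow>
                 length (\<pi> S) = 3 \<and> distinct (\<pi> S) \<and> set (\<pi> S) = S"
    and close: "\<And>S S'. S \<subseteq> U \<Longrightarrow> card S = 3 \<Longrightarrow> S' \<subseteq> U \<Longrightarrow> card S' = 3 \<Longrightarrow>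
                 card (symdiff S S') = 2 \<Longrightarrow> hamming (\<pi> S) (\<pi> S') \<le> 2"
  shows "\<forall>x\<in>U. \<forall>y\<in>U. x \<noteq> y \<longrightarrow>
           (\<exists>i<3. (\<forall>S. S \<subseteq> U \<and> card S = 3 \<and> {x, y} \<subset> S \<longrightarrow> \<pi> S ! i = x)
                \<or> (\<forall>S. S \<subseteq> U \<and> card S = 3 \<and> {x, y} \<subset> S \<longrightarrow> \<pi> S ! i = y))"
proof (intro ballI impI)
  fix x y assume xU: "x \<in> U" and yU: "y \<in> U" and xy: "x \<noteq> y"
  have finU: "finite U" unfolding U_def by simp
  have cU: "card U = 5"
  proof -
    have "U = set [a,b,c,d,e]" unfolding U_def by simp
    then show ?thesis using distinct_card[OF dist] by simp
  qed
  have "card (U - {x,y}) = 3"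
    using cU xU yU xy finU by (simp add: card_Diff_subset)
  then obtain z1 z2 z3 where Z: "U - {x,y} = {z1,z2,z3}" and
    zd: "z1 \<noteq> z2" "z2 \<noteq> z3" "z1 \<noteq> z3"
    by (auto simp: card_3_iff)
  have zU: "z1 \<in> U" "z2 \<in> U" "z3 \<in> U" and zn: "z1 \<noteq> x" "z1 \<noteq> y" "z2 \<noteq> x" "z2 \<noteq> y" "z3 \<noteq> x" "z3 \<noteq> y"
    using Z by blast+
  define S1 where "S1 = {x,y,z1}"
  define S2 where "S2 = {x,y,z2}"
  define S3 where "S3 = {x,y,z3}"
  have SU: "S1 \<subseteq> U" "S2 \<subseteq> U" "S3 \<subseteq> U" unfolding S1_def S2_def S3_def using xU yU zU by auto
  have Sc: "card S1 = 3" "card S2 = 3" "card S3 = 3"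
    unfolding S1_def S2_def S3_def using xy zn by auto
  have o1: "length (\<pi> S1) = 3" "distinct (\<pi> S1)" "set (\<pi> S1) = S1" using ord SU Sc by blast+
  have o2: "length (\<pi> S2) = 3" "distinct (\<pi> S2)" "set (\<pi> S2) = S2" using ord SU Sc by blast+
  have o3: "length (\<pi> S3) = 3" "distinct (\<pi> S3)" "set (\<pi> S3) = S3" using ord SU Sc by blast+
  have sd: "card (symdiff S1 S2) = 2" "card (symdiff S1 S3) = 2" "card (symdiff S2 S3) = 2"
  proof -
    have "symdiff S1 S2 = {z1,z2}" "symdiff S1 S3 = {z1,z3}" "symdiff S2 S3 = {z2,z3}"
      unfolding symdiff_def S1_def S2_def S3_def using zn zd by auto
    then show "card (symdiff S1 S2) = 2" "card (symdiff S1 S3) = 2" "card (symdiff S2 S3) = 2"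
      using zd by auto
  qed
  have hm: "hamming (\<pi> S1) (\<pi> S2) \<le> 2" "hamming (\<pi> S1) (\<pi> S3) \<le> 2" "hamming (\<pi> S2) (\<pi> S3) \<le> 2"
    using close SU Sc sd by blast+
  have int: "set (\<pi> S1) \<inter> set (\<pi> S2) \<subseteq> {x,y}" "set (\<pi> S1) \<inter> set (\<pi> S3) \<subseteq> {x,y}"
     "set (\<pi> S2) \<inter> set (\<pi> S3) \<subseteq> {x,y}"
    unfolding o1(3) o2(3) o3(3) unfolding S1_def S2_def S3_def using zd by auto
  have mem: "x \<in> set (\<pi> S1)" "y \<in> set (\<pi> S1)" "x \<in> set (\<pi> S2)" "y \<in> set (\<pi> S2)"
     "x \<in> set (\<pi> S3)" "y \<in> set (\<pi> S3)"
    unfolding o1(3) o2(3) o3(3) unfolding S1_def S2_def S3_def by auto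
  obtain A1 where A1: "A1 < 3" "\<pi> S1 ! A1 = x" using pos[OF o1(1) mem(1)] by blast
  obtain B1 where B1: "B1 < 3" "\<pi> S1 ! B1 = y" using pos[OF o1(1) mem(2)] by blast
  obtain A2 where A2: "A2 < 3" "\<pi> S2 ! A2 = x" using pos[OF o2(1) mem(3)] by blast
  obtain B2 where B2: "B2 < 3" "\<pi> S2 ! B2 = y" using pos[OF o2(1) mem(4)] by blast
  obtain A3 where A3: "A3 < 3" "\<pi> S3 ! A3 = x" using pos[OF o3(1) mem(5)] by blast
  obtain B3 where B3: "B3 < 3" "\<pi> S3 ! B3 = y" using pos[OF o3(1) mem(6)] by blast
  have g12: "A1 = A2 \<or> B1 = B2"
    by (rule agree[OF o1(1) o2(1) o1(2) o2(2) hm(1) int(1) A1(2) A2(2) B1(2) B2(2) A1(1) A2(1) B1(1) B2(1)])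
  have g13: "A1 = A3 \<or> B1 = B3"
    by (rule agree[OF o1(1) o3(1) o1(2) o3(2) hm(2) int(2) A1(2) A3(2) B1(2) B3(2) A1(1) A3(1) B1(1) B3(1)])
  have g23: "A2 = A3 \<or> B2 = B3"
    by (rule agree[OF o2(1) o3(1) o2(2) o3(2) hm(3) int(3) A2(2) A3(2) B2(2) B3(2) A2(1) A3(1) B2(1) B3(1)])
  have cases: "S = S1 \<or> S = S2 \<or> S = S3" if hS: "S \<subseteq> U" "card S = 3" "{x,y} \<subset> S" for S
  proof -
    obtain t where t: "t \<in> S" "t \<notin> {x,y}" using hS(3) by blast
    then have tz: "t = z1 \<or> t = z2 \<or> t = z3" using hS(1) Z by blast
    have "{x,y,t} \<subseteq> S" using t hS(3) by blast
    moreover have "card {x,y,t} = 3" using t xy by auto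
    moreover have "finite S" using hS(1) finU finite_subset by blast
    ultimately have "{x,y,t} = S" using hS(2) card_subset_eq by metis
    then show ?thesis using tz unfolding S1_def S2_def S3_def by blast
  qed
  from comb[OF g12 g13 g23] show "\<exists>i<3. (\<forall>S. S \<subseteq> U \<and> card S = 3 \<and> {x, y} \<subset> S \<longrightarrow> \<pi> S ! i = x)
                \<or> (\<forall>S. S \<subseteq> U \<and> card S = 3 \<and> {x, y} \<subset> S \<longrightarrow> \<pi> S ! i = y)"
  proof
    assume "A1 = A2 \<and> A1 = A3"
    then show ?thesis using A1 A2 A3 cases by metis
  next
    assume "B1 = B2 \<and> B1 = B3"
    then show ?thesis using B1 B2 B3 cases by metis
  qed
qed

end
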